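(* Let $\alpha$ be an infinite permutation. If for some positive integer $N$, $\alpha$ has an $N$-monotone subpermutation, then $\alpha$ is not equidistributed.
   Context: An infinite permutation is an equivalence class of sequences $(a[n])_{n\ge0}$ of pairwise distinct reals, where two sequences are equivalent if $a[i]<a[j]\iff b[i]<b[j]$ for all $i,j$; write $\alpha=(\alpha[n])_{n\ge0}$ with $\alpha[i]<\alpha[j]$ iff $a[i]<a[j]$ for a representative. A sequence $(a[n])$ in $[0,1]$ is equidistributed if $\lim_{n\to\infty}\frac{\#\{0\le i<n:a[i]<t\}}{n}=t$ for each $t\in[0,1]$; a permutation is equidistributed if it has an equidistributed representative in $[0,1]$. For a strictly increasing sequence of indices $(n_i)_{i\ge1}$, the subpermutation $(\alpha[n_i])$ is $N$-growing (resp. $N$-decreasing) if $n_{i+1}-n_i\le N$ and $\alpha[n_{i+1}]>\alpha[n_i]$ (resp. $<$) for all $i$; it is $N$-monotone if it is $N$-growing or $N$-decreasing. *)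

theory Defs
  imports Complex_Main
begin

text \<open>An infinite permutation is represented by any sequence of pairwise distinct
reals; two sequences represent the same permutation iff they have the same
relative order.\<close>

definition same_order :: "(nat \<Rightarrow> real) \<Rightarrow> (nat \<Rightarrow> real) \<Rightarrow> bool" where
  "same_order a b \<longleftrightarrow> (\<forall>i j. a i < a j \<longleftrightarrow> b i < b j)"

definition equidistributed_seq :: "(nat \<Rightarrow> real) \<Rightarrow> bool" where
  "equidistributed_seq a \<longleftrightarrow> (\<forall>n. a n \<in> {0..1}) \<and>
     (\<forall>t\<in>{0..1}. (\<lambda>n. real (card {i. i < n \<and> a i < t}) / real n) \<longlonglongrightarrow> t)"

definition equidistributed_perm :: "(nat \<Rightarrow> real) \<Rightarrow> bool" where
  "equidistributed_perm a \<longleftrightarrow> (\<exists>b. inj b \<and> same_order a b \<and> equidistributed_seq b)"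

definition N_growing :: "nat \<Rightarrow> (nat \<Rightarrow> real) \<Rightarrow> (nat \<Rightarrow> nat) \<Rightarrow> bool" where
  "N_growing N a n \<longleftrightarrow> strict_mono n \<and>
     (\<forall>i. n (Suc i) - n i \<le> N \<and> a (n i) < a (n (Suc i)))"

definition N_decreasing :: "nat \<Rightarrow> (nat \<Rightarrow> real) \<Rightarrow> (nat \<Rightarrow> nat) \<Rightarrow> bool" where
  "N_decreasing N a n \<longleftrightarrow> strict_mono n \<and>
     (\<forall>i. n (Suc i) - n i \<le> N \<and> a (n i) > a (n (Suc i)))"

definition has_N_monotone_subperm :: "nat \<Rightarrow> (nat \<Rightarrow> real) \<Rightarrow> bool" where
  "has_N_monotone_subperm N a \<longleftrightarrow> (\<exists>n. N_growing N a n \<or> N_decreasing N a n)"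

end

theory Submission
  imports Defs
begin

lemma n_bound:
  assumes sm: "strict_mono n" and gap: "\<forall>i. n (Suc i) - n i \<le> N"
  shows "n k \<le> n 0 + k * N"
proof (induction k)
  case 0 then show ?case by simp
next
  case (Suc k)
  have "n k < n (Suc k)" using sm by (simp add: strict_mono_Suc_iff)
  then have "n (Suc k) \<le> n k + N" using gap[rule_format, of k] by linarith
  then show ?case using Suc by simp
qed

lemma div_lower: "real a / real N - 1 \<le> real (a div (N::nat))" if "N > 0"
proof -
  have "a = (a div N) * N + a mod N" by simp
  then have "real a = real (a div N) * real N + real (a mod N)"
    by (metis of_nat_add of_nat_mult)
  moreover have "real (a mod N) < real N" using that by simp
  ultimately have "real a < (real (a div N) + 1) * real N" by (simp add: algebra_simps)
  then have "real a / real N < real (a div N) + 1" using that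
    by (simp add: divide_less_eq)
  then show ?thesis by linarith
qed

lemma core:
  assumes eq: "equidistributed_seq b" and N: "N > 0" and sm: "strict_mono n"
    and gap: "\<forall>i. n (Suc i) - n i \<le> N"
    and t: "0 \<le> t1" "t1 \<le> t2" "t2 \<le> 1" "t2 - t1 < 1 / real N"
    and inn: "\<forall>i. t1 \<le> b (n i) \<and> b (n i) < t2"
  shows False
proof -
  define c where "c t m = real (card {i. i < m \<and> b i < t})" for t m
  have l1: "(\<lambda>m. c t1 m / real m) \<longlonglongrightarrow> t1" using eq t unfolding equidistributed_seq_def c_def by auto
  have l2: "(\<lambda>m. c t2 m / real m) \<longlonglongrightarrow> t2" using eq t unfolding equidistributed_seq_def c_def by auto
  have l3: "(\<lambda>m. (c t2 m - c t1 m) / real m) \<longlonglongrightarrow> t2 - t1"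
    using tendsto_diff[OF l2 l1] by (simp add: diff_divide_distrib)
  define C where "C = real (n 0) / real N + 1"
  have l4: "(\<lambda>m. 1 / real N - C / real m) \<longlonglongrightarrow> 1 / real N - 0"
    by (intro tendsto_diff tendsto_const lim_const_over_n)
  have bound: "1 / real N - C / real m \<le> (c t2 m - c t1 m) / real m" if m: "m \<ge> 1" for m
  proof -
    define K where "K = (m - n 0) div N"
    have split: "{i. i < m \<and> b i < t2} = {i. i < m \<and> b i < t1} \<union> {i. i < m \<and> t1 \<le> b i \<and> b i < t2}"
      using t by auto
    have "card {i. i < m \<and> b i < t2} = card {i. i < m \<and> b i < t1} + card {i. i < m \<and> t1 \<le> b i \<and> b i < t2}"
      unfolding split by (rule card_Un_disjoint) auto
    then have cd: "c t2 m - c t1 m = real (card {i. i < m \<and> t1 \<le> b i \<and> b i < t2})"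
      unfolding c_def by simp
    have sub: "n ` {..<K} \<subseteq> {i. i < m \<and> t1 \<le> b i \<and> b i < t2}"
    proof
      fix x assume "x \<in> n ` {..<K}"
      then obtain k where k: "k < K" "x = n k" by auto
      have "K * N \<le> m - n 0" unfolding K_def by simp
      moreover have "k * N < K * N" using k N by simp
      ultimately have "k * N < m - n 0" by linarith
      then have "n 0 + k * N < m" by linarith
      with n_bound[OF sm gap, of k] have "n k < m" by linarith
      then show "x \<in> {i. i < m \<and> t1 \<le> b i \<and> b i < t2}" using k inn by auto
    qed
    have "card (n ` {..<K}) = K" using card_image[OF strict_mono_imp_inj_on[OF sm]] by simp
    then have "K \<le> card {i. i < m \<and> t1 \<le> b i \<and> b i < t2}"
      using card_mono[OF _ sub] by simp
    then have Kle: "real K \<le> c t2 m - c t1 m" using cd by simp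
    have "real (m - n 0) / real N - 1 \<le> real K" unfolding K_def using div_lower N by blast
    moreover have "real m - real (n 0) \<le> real (m - n 0)" by simp
    ultimately have "real m / real N - C \<le> real K" unfolding C_def using N
      by (smt (verit, ccfv_SIG) diff_divide_distrib divide_right_mono of_nat_0_le_iff)
    with Kle have "real m / real N - C \<le> c t2 m - c t1 m" by linarith
    then have "(real m / real N - C) / real m \<le> (c t2 m - c t1 m) / real m"
      using m by (simp add: divide_right_mono)
    moreover have "(real m / real N - C) / real m = 1 / real N - C / real m"
      using m by (simp add: field_simps)
    ultimately show ?thesis by simp
  qed
  have "1 / real N - 0 \<le> t2 - t1"
    by (rule LIMSEQ_le[OF l4 l3]) (use bound in auto)
  with t show False by simp
qed

lemma shift:
  assumes "strict_mono n" "\<forall>i. n (Suc i) - n i \<le> N"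
  shows "strict_mono (\<lambda>i. n (i + i0))" "\<forall>i. n (Suc i + i0) - n (i + i0) \<le> N"
  using assms by (auto simp: strict_mono_def)

theorem proposition1:
  fixes a :: "nat \<Rightarrow> real" and N :: nat
  assumes "inj a"
    and "N > 0"
    and "has_N_monotone_subperm N a"
  shows "\<not> equidistributed_perm a"
proof
  assume "equidistributed_perm a"
  then obtain b where so: "same_order a b" and eq: "equidistributed_seq b"
    unfolding equidistributed_perm_def by blast
  have b01: "0 \<le> b x" "b x \<le> 1" for x using eq unfolding equidistributed_seq_def by auto
  from assms(3) obtain n where nn: "N_growing N a n \<or> N_decreasing N a n"
    unfolding has_N_monotone_subperm_def by blast
  have sm: "strict_mono n" and gap: "\<forall>i. n (Suc i) - n i \<le> N"
    using nn unfolding N_growing_def N_decreasing_def by auto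
  define f where "f i = b (n i)" for i
  define e where "e = 1 / (2 * real N)"
  have e0: "e > 0" and eN: "e < 1 / real N" using assms(2) unfolding e_def by (auto simp: field_simps)
  have bdd: "bdd_above (range f)" "bdd_below (range f)" unfolding f_def using b01
    by (auto intro!: bdd_aboveI[of _ 1] bdd_belowI[of _ 0])
  show False
  proof (cases "N_growing N a n")
    case True
    then have inc: "f i < f (Suc i)" for i using so unfolding N_growing_def same_order_def f_def by blast
    then have smf: "strict_mono f" by (simp add: strict_mono_Suc_iff)
    define L where "L = (SUP i. f i)"
    have lim: "f \<longlonglongrightarrow> L" unfolding L_def
      by (rule LIMSEQ_incseq_SUP[OF bdd(1)]) (use smf in \<open>simp add: strict_mono_mono incseq_def strict_mono_less_eq\<close>)
    have fL: "f i < L" for i using inc[of i] cSUP_upper[OF _ bdd(1), of "Suc i"] unfolding L_def by fastforce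
    have L1: "L \<le> 1" unfolding L_def by (rule cSUP_least) (auto simp: f_def b01)
    have L0: "0 \<le> L" using fL[of 0] b01[of "n 0"] unfolding f_def by linarith
    obtain i0 where i0: "\<forall>i\<ge>i0. norm (f i - L) < e" using lim e0 unfolding LIMSEQ_iff by blast
    show False
    proof (rule core[OF eq assms(2) shift[OF sm gap, of i0]])
      show "0 \<le> max 0 (L - e)" "max 0 (L - e) \<le> L" "L \<le> 1" "L - max 0 (L - e) < 1 / real N"
        using L0 L1 e0 eN by auto
      show "\<forall>i. max 0 (L - e) \<le> b (n (i + i0)) \<and> b (n (i + i0)) < L"
      proof
        fix i
        have "norm (f (i + i0) - L) < e" using i0 by simp
        then show "max 0 (L - e) \<le> b (n (i + i0)) \<and> b (n (i + i0)) < L"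
          using fL[of "i+i0"] b01[of "n (i+i0)"] unfolding f_def by auto
      qed
    qed
  next
    case False
    with nn have "N_decreasing N a n" by simp
    then have dec: "f (Suc i) < f i" for i using so unfolding N_decreasing_def same_order_def f_def by blast
    define L where "L = (INF i. f i)"
    have "decseq f" using dec by (simp add: decseq_SucI less_imp_le)
    then have lim: "f \<longlonglongrightarrow> L" unfolding L_def
      by (rule LIMSEQ_decseq_INF[OF bdd(2)])
    have fL: "L < f i" for i using dec[of i] cINF_lower[OF bdd(2), of "Suc i"] unfolding L_def by fastforce
    have L0: "0 \<le> L" unfolding L_def by (rule cINF_greatest) (auto simp: f_def b01)
    have L1: "L \<le> 1" using fL[of 0] b01[of "n 0"] unfolding f_def by linarith
    obtain i0 where i0: "\<forall>i\<ge>i0. norm (f i - L) < e" using lim e0 unfolding LIMSEQ_iff by blast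
    have f1: "f i < 1" if "i \<ge> 1" for i
    proof -
      have "f i \<le> f 1" using \<open>decseq f\<close> that by (simp add: decseq_def)
      then have "f i < f 0" using dec[of 0] by simp
      then show ?thesis using b01[of "n 0"] unfolding f_def by linarith
    qed
    show False
    proof (rule core[OF eq assms(2) shift[OF sm gap, of "max i0 1"]])
      show "0 \<le> L" "L \<le> min 1 (L + e)" "min 1 (L + e) \<le> 1" "min 1 (L + e) - L < 1 / real N"
        using L0 L1 e0 eN by auto
      show "\<forall>i. L \<le> b (n (i + max i0 1)) \<and> b (n (i + max i0 1)) < min 1 (L + e)"
      proof
        fix i
        have "norm (f (i + max i0 1) - L) < e" using i0 by simp
        moreover have "f (i + max i0 1) < 1" by (rule f1) simp
        ultimately show "L \<le> b (n (i + max i0 1)) \<and> b (n (i + max i0 1)) < min 1 (L + e)"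
          using fL[of "i + max i0 1"] unfolding f_def by auto
      qed
    qed
  qed
qed

end
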